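(* Over $\operatorname{Spec}(\mathbb Z[1/2])$ there is an isomorphism of representations of $G$ \[ \rho_4\cong 1\oplus\chi\oplus\rho_2 \] such that the projection to the first summand $1$ (the trivial one-dimensional representation) is the trace homomorphism $\rho_4\to 1$.
   Context: Work with group schemes over $\operatorname{Spec}(\mathbb Z)$. Let $H\subset GL_2$ be the subgroup scheme of invertible matrices that are either diagonal or antidiagonal, and $N:H\to\mathbb G_m$ the homomorphism given by the product of the two nonzero entries. Let $G=\ker N$; its points are the matrices $\mathrm{diag}(\alpha,\alpha^{-1})$ and $\begin{pmatrix}0&\beta\\ \beta^{-1}&0\end{pmatrix}$. Let $\rho_2$ be the tautological $2$-dimensional representation of $G\subset GL_2$. The map $q:G\to G$ squaring each matrix entry is a surjective homomorphism with kernel $\mu_2=\{\pm I\}$. The representations $\det(\rho_2)$ and $\rho_2^\vee\otimes\rho_2$ of the source $G$ of $q$ are trivial on $\mu_2$, hence factor through $q$ and define linear representations $\chi$ and $\rho_4$ of the target $G$; the trace $\rho_2^\vee\otimes\rho_2\to 1$ induces the trace homomorphism $\rho_4\to1$. In the claimed isomorphism, $\rho_2$ denotes the tautological representation of the target $G$. *)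

theory Defs
  imports "Jordan_Normal_Form.Determinant"
begin

text \<open>Group schemes are treated through their functor of points on commutative rings
('r :: comm_ring_1).  Matrices are Jordan_Normal_Form matrices.\<close>

definition G_points :: "'r::comm_ring_1 mat set" where
  "G_points =
     {mat_of_rows_list 2 [[a, 0], [0, a']] | a a'. a * a' = 1} \<union>
     {mat_of_rows_list 2 [[0, b], [b', 0]] | b b'. b * b' = 1}"

definition q_sq :: "'r::comm_ring_1 mat \<Rightarrow> 'r mat" where
  "q_sq h = map_mat (\<lambda>x. x ^ 2) h"

definition rho2 :: "'r::comm_ring_1 mat \<Rightarrow> 'r mat" where
  "rho2 g = g"

text \<open>Character chi on the target G: the descent of det(rho_2) along q.
  For g = q(h) one has chi(g) = det h, which equals det g (both are 1 on the
  diagonal component and -1 on the antidiagonal one).\<close>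
definition chi :: "'r::comm_ring_1 mat \<Rightarrow> 'r mat" where
  "chi g = mat_of_rows_list 1 [[det g]]"

text \<open>rho_4 on the target G: the descent of rho_2^dual tensor rho_2 = End(V) (action
  X |-> h X h^-1) along q, written in the basis E11, E12, E21, E22 of End(V).
  For g = q(h) this is exactly the matrix of X |-> h X h^-1.\<close>
definition rho4 :: "'r::comm_ring_1 mat \<Rightarrow> 'r mat" where
  "rho4 g = (let x = g $$ (0,0); y = g $$ (0,1); z = g $$ (1,0); w = g $$ (1,1) in
     mat_of_rows_list 4
       [[x*w, 0, 0, y*z],
        [0,   x, y, 0],
        [0,   z, w, 0],
        [y*z, 0, 0, x*w]])"

definition dsum :: "'r::comm_ring_1 mat \<Rightarrow> 'r mat \<Rightarrow> 'r mat" where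
  "dsum A B = four_block_mat A (0\<^sub>m (dim_row A) (dim_col B)) (0\<^sub>m (dim_row B) (dim_col A)) B"

definition triv_chi_rho2 :: "'r::comm_ring_1 mat \<Rightarrow> 'r mat" where
  "triv_chi_rho2 g = dsum (1\<^sub>m 1) (dsum (chi g) (rho2 g))"

definition trace_vec :: "int vec" where
  "trace_vec = vec_of_list [1, 0, 0, 1]"

end

theory Submission imports Defs begin
definition Mi :: "int mat" where "Mi = mat_of_rows_list 4 [[1,0,0,1],[1,0,0,-1],[0,1,0,0],[0,0,1,0]]"
definition Ni :: "int mat" where "Ni = mat_of_rows_list 4 [[1,1,0,0],[0,0,2,0],[0,0,0,2],[1,-1,0,0]]"

lemma four: "(i::nat) < 4 \<longleftrightarrow> i = 0 \<or> i = 1 \<or> i = 2 \<or> i = 3" by auto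
lemma two: "(i::nat) < 2 \<longleftrightarrow> i = 0 \<or> i = 1" by auto

lemma MN: "Mi * Ni = (2 ^ 1) \<cdot>\<^sub>m 1\<^sub>m 4"
  by (rule eq_matI) (auto simp: Mi_def Ni_def mat_of_rows_list_def scalar_prod_def row_def col_def numeral_eq_Suc less_Suc_eq)
lemma NM: "Ni * Mi = (2 ^ 1) \<cdot>\<^sub>m 1\<^sub>m 4"
  by (rule eq_matI) (auto simp: Mi_def Ni_def mat_of_rows_list_def scalar_prod_def row_def col_def numeral_eq_Suc less_Suc_eq)
lemma R: "row Mi 0 = (2 ^ 0) \<cdot>\<^sub>v trace_vec"
  by (rule eq_vecI) (auto simp: Mi_def trace_vec_def mat_of_rows_list_def vec_of_list_index less_Suc_eq numeral_eq_Suc)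

lemma det1: assumes "A \<in> carrier_mat 1 1" shows "det A = A $$ (0,0)"
  by (subst det_upper_triangular[OF _ assms]) (insert assms, auto simp: upper_triangular_def diag_mat_def)

lemma det2: fixes A :: "'a::comm_ring_1 mat" assumes A: "A \<in> carrier_mat 2 2"
  shows "det A = A $$ (0,0) * A $$ (1,1) - A $$ (0,1) * A $$ (1,0)"
proof -
  have "det A = (\<Sum>i<2. A $$ (i,0) * cofactor A i 0)"
    by (rule laplace_expansion_column[OF A]) simp
  also have "\<dots> = A $$ (0,0) * A $$ (1,1) - A $$ (0,1) * A $$ (1,0)"
    using A by (simp add: numeral_eq_Suc cofactor_def det1 mat_delete_def)
  finally show ?thesis .
qed

lemma diag: fixes a a' :: "'r::comm_ring_1" assumes "a*a' = 1"
  shows "map_mat of_int Mi * rho4 (mat_of_rows_list 2 [[a, 0], [0, a']]) = triv_chi_rho2 (mat_of_rows_list 2 [[a, 0], [0, a']]) * map_mat of_int Mi"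
  by (rule eq_matI) (auto simp: assms Mi_def rho4_def triv_chi_rho2_def dsum_def chi_def rho2_def four_block_mat_def det2 less_Suc_eq numeral_eq_Suc
   mat_of_rows_list_def scalar_prod_def row_def col_def numeral_eq_Suc less_Suc_eq)

lemma adiag: fixes b b' :: "'r::comm_ring_1" assumes "b*b' = 1"
  shows "map_mat of_int Mi * rho4 (mat_of_rows_list 2 [[0, b], [b', 0]]) = triv_chi_rho2 (mat_of_rows_list 2 [[0, b], [b', 0]]) * map_mat of_int Mi"
  by (rule eq_matI) (auto simp: assms Mi_def rho4_def triv_chi_rho2_def dsum_def chi_def rho2_def four_block_mat_def det2 less_Suc_eq numeral_eq_Suc
   mat_of_rows_list_def scalar_prod_def row_def col_def numeral_eq_Suc less_Suc_eq)

theorem proposition5p1: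
  assumes two_unit: "(2::'r::comm_ring_1) dvd 1"
  shows "\<exists>(M :: int mat) (N :: int mat) (e :: nat) (f :: nat).
     M \<in> carrier_mat 4 4 \<and> N \<in> carrier_mat 4 4 \<and>
     M * N = (2 ^ f) \<cdot>\<^sub>m 1\<^sub>m 4 \<and> N * M = (2 ^ f) \<cdot>\<^sub>m 1\<^sub>m 4 \<and>
     row M 0 = (2 ^ e) \<cdot>\<^sub>v trace_vec \<and>
     (\<forall>g \<in> (G_points :: 'r mat set).
        map_mat of_int M * rho4 g = triv_chi_rho2 g * map_mat of_int M)"
proof (intro exI conjI)
  show "Mi \<in> carrier_mat 4 4" by (simp add: Mi_def mat_of_rows_list_def numeral_eq_Suc)
  show "Ni \<in> carrier_mat 4 4" by (simp add: Ni_def mat_of_rows_list_def numeral_eq_Suc)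
  show "Mi * Ni = (2 ^ 1) \<cdot>\<^sub>m 1\<^sub>m 4" by (rule MN)
  show "Ni * Mi = (2 ^ 1) \<cdot>\<^sub>m 1\<^sub>m 4" by (rule NM)
  show "row Mi 0 = (2 ^ 0) \<cdot>\<^sub>v trace_vec" by (rule R)
  show "\<forall>g \<in> (G_points :: 'r mat set).
        map_mat of_int Mi * rho4 g = triv_chi_rho2 g * map_mat of_int Mi"
    unfolding G_points_def using diag adiag by blast
qed

end
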